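(* For every integer $k \ge 4$, $\gamma(k) \ge 5\cdot 2^{k-2} - 1$.
   Context: For words $C,S$, $C$ is an \emph{s-cover} of $S$ if for every position $i$ of $S$ there exist indices $j_0<\dots<j_{|C|-1}$ with $S[j_t]=C[t]$ for all $t$ and $i\in\{j_0,\dots,j_{|C|-1}\}$. An s-cover $C$ of $S$ is \emph{non-trivial} if $|C|<|S|$; a word is \emph{s-primitive} if it has no non-trivial s-cover. $\gamma(k)$ is the maximum length of an s-primitive word over an alphabet of size $k$. *)

theory Defs
  imports Main "HOL-Library.Extended_Nat"
begin

definition s_cover :: "'a list \<Rightarrow> 'a list \<Rightarrow> bool" where
  "s_cover C S \<longleftrightarrow>
     (\<forall>i < length S. \<exists>j :: nat \<Rightarrow> nat.
        (\<forall>t. Suc t < length C \<longrightarrow> j t < j (Suc t)) \<and>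
        (\<forall>t < length C. j t < length S \<and> S ! (j t) = C ! t) \<and>
        (\<exists>t < length C. j t = i))"

definition nontrivial_s_cover :: "'a list \<Rightarrow> 'a list \<Rightarrow> bool" where
  "nontrivial_s_cover C S \<longleftrightarrow> s_cover C S \<and> length C < length S"

definition s_primitive :: "'a list \<Rightarrow> bool" where
  "s_primitive S \<longleftrightarrow> \<not> (\<exists>C. nontrivial_s_cover C S)"

text \<open>Alphabet of size k: the letters 0..k-1. gamma k is the supremum (maximum)
of lengths of s-primitive words over it, taken in enat so no finiteness is presupposed.\<close>

definition gamma :: "nat \<Rightarrow> enat" where
  "gamma k = Sup {enat (length w) | w :: nat list. set w \<subseteq> {0..<k} \<and> s_primitive w}"

end

theory Submission
  imports Defs "HOL-Library.Sublist"
begin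

lemma chain_mono:
  assumes "\<forall>t. Suc t < n \<longrightarrow> (j::nat\<Rightarrow>nat) t < j (Suc t)" "t1 < t2" "t2 < n"
  shows "j t1 < j t2"
  using assms(2,3)
proof (induction t2)
  case 0 then show ?case by simp
next
  case (Suc t2)
  then show ?case using assms(1)
    by (metis Suc_lessD less_Suc_eq order.strict_trans)
qed

definition emb_idx :: "(nat \<Rightarrow> nat) \<Rightarrow> 'a list \<Rightarrow> 'a list \<Rightarrow> bool" where
  "emb_idx j xs ys \<longleftrightarrow> (\<forall>t. Suc t < length xs \<longrightarrow> j t < j (Suc t)) \<and>
     (\<forall>t<length xs. j t < length ys \<and> ys ! (j t) = xs ! t)"

lemma subseq_imp_idx: "subseq xs ys \<Longrightarrow> \<exists>j. emb_idx j xs ys"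
proof (induction rule: list_emb.induct)
  case (list_emb_Nil ys)
  then show ?case by (auto simp: emb_idx_def)
next
  case (list_emb_Cons xs ys y)
  then obtain j where "emb_idx j xs ys" by blast
  then have "emb_idx (\<lambda>t. Suc (j t)) xs (y # ys)" by (auto simp: emb_idx_def)
  then show ?case by blast
next
  case (list_emb_Cons2 x y xs ys)
  then obtain j where j: "emb_idx j xs ys" by blast
  define j' where "j' = (\<lambda>t. case t of 0 \<Rightarrow> 0 | Suc t' \<Rightarrow> Suc (j t'))"
  have "emb_idx j' (x # xs) (y # ys)"
    using j list_emb_Cons2(1) unfolding emb_idx_def j'_def
    by (auto split: nat.splits simp: less_Suc_eq_0_disj)
  then show ?case by blast
qed

lemma idx_imp_subseq: "emb_idx j xs ys \<Longrightarrow> subseq xs ys"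
proof (induction ys arbitrary: xs j)
  case Nil
  then show ?case by (cases xs) (auto simp: emb_idx_def)
next
  case (Cons y ys)
  show ?case
  proof (cases xs)
    case Nil then show ?thesis by simp
  next
    case (Cons x xs')
    note xs = this
    have mono: "\<forall>t. Suc t < length xs \<longrightarrow> j t < j (Suc t)" using Cons.prems by (simp add: emb_idx_def)
    show ?thesis
    proof (cases "j 0 = 0")
      case True
      have pos: "0 < j (Suc t)" if "Suc t < length xs" for t
        using chain_mono[OF mono, of 0 "Suc t"] that True by simp
      have "emb_idx (\<lambda>t. j (Suc t) - 1) xs' ys"
        unfolding emb_idx_def
      proof (rule conjI; intro allI impI)
        fix t assume t: "Suc t < length xs'"
        then have "j (Suc t) < j (Suc (Suc t))" using mono xs by simp
        moreover have "0 < j (Suc t)" using pos t xs by simp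
        ultimately show "j (Suc t) - 1 < j (Suc (Suc t)) - 1" by simp
      next
        fix t assume t: "t < length xs'"
        have p: "0 < j (Suc t)" using pos t xs by simp
        have "j (Suc t) < length (y # ys) \<and> (y # ys) ! j (Suc t) = xs ! Suc t"
          using Cons.prems t xs unfolding emb_idx_def by simp
        then show "j (Suc t) - 1 < length ys \<and> ys ! (j (Suc t) - 1) = xs' ! t"
          using p xs by (cases "j (Suc t)") auto
      qed
      then have "subseq xs' ys" using Cons.IH by blast
      moreover have "x = y" using Cons.prems True unfolding emb_idx_def xs by force
      ultimately show ?thesis using xs by simp
    next
      case False
      have pos: "0 < j t" if "t < length xs" for t
        using chain_mono[OF mono, of 0 t] that False by (cases t) auto
      have "emb_idx (\<lambda>t. j t - 1) xs ys"
        unfolding emb_idx_def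
      proof (rule conjI; intro allI impI)
        fix t assume t: "Suc t < length xs"
        then have "j t < j (Suc t)" using mono by simp
        moreover have "0 < j t" using pos t by simp
        ultimately show "j t - 1 < j (Suc t) - 1" by simp
      next
        fix t assume t: "t < length xs"
        have p: "0 < j t" using pos t by simp
        have "j t < length (y # ys) \<and> (y # ys) ! j t = xs ! t"
          using Cons.prems t unfolding emb_idx_def by simp
        then show "j t - 1 < length ys \<and> ys ! (j t - 1) = xs ! t"
          using p by (cases "j t") auto
      qed
      then have "subseq xs ys" using Cons.IH by blast
      then show ?thesis by blast
    qed
  qed
qed

lemma subseq_idx: "subseq xs ys \<longleftrightarrow> (\<exists>j. emb_idx j xs ys)"
  using subseq_imp_idx idx_imp_subseq by blast

definition pos_cov :: "'a list \<Rightarrow> 'a list \<Rightarrow> nat \<Rightarrow> bool" where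
  "pos_cov C S i \<longleftrightarrow> (\<exists>t<length C. C!t = S!i \<and> subseq (take t C) (take i S) \<and>
      subseq (drop (Suc t) C) (drop (Suc i) S))"

lemma occ_imp_pos_cov:
  assumes j: "emb_idx j C S" and t: "t < length C" and jt: "j t = i"
  shows "pos_cov C S i"
proof -
  have mono: "\<forall>t. Suc t < length C \<longrightarrow> j t < j (Suc t)" using j by (simp add: emb_idx_def)
  have vals: "\<And>t. t < length C \<Longrightarrow> j t < length S \<and> S ! (j t) = C ! t" using j by (simp add: emb_idx_def)
  have "C!t = S!i" using vals[OF t] jt by simp
  moreover have "emb_idx j (take t C) (take i S)"
    unfolding emb_idx_def
  proof (rule conjI; intro allI impI)
    fix x assume "Suc x < length (take t C)"
    then show "j x < j (Suc x)" using mono by simp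
  next
    fix x assume x: "x < length (take t C)"
    then have "j x < j t" using chain_mono[OF mono, of x t] t by simp
    then show "j x < length (take i S) \<and> take i S ! j x = take t C ! x"
      using vals[of x] x t jt by simp
  qed
  moreover have "emb_idx (\<lambda>x. j (Suc t + x) - Suc i) (drop (Suc t) C) (drop (Suc i) S)"
    unfolding emb_idx_def
  proof (rule conjI; intro allI impI)
    fix x assume x: "Suc x < length (drop (Suc t) C)"
    have "j t < j (Suc t + x)" using chain_mono[OF mono, of t "Suc t + x"] x by simp
    moreover have "j (Suc t + x) < j (Suc (Suc t + x))" using mono x by simp
    ultimately show "j (Suc t + x) - Suc i < j (Suc t + Suc x) - Suc i" using jt by simp
  next
    fix x assume x: "x < length (drop (Suc t) C)"
    have lt: "j t < j (Suc t + x)" using chain_mono[OF mono, of t "Suc t + x"] x by simp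
    have v: "j (Suc t + x) < length S \<and> S ! j (Suc t + x) = C ! (Suc t + x)" using vals x by simp
    show "j (Suc t + x) - Suc i < length (drop (Suc i) S) \<and>
          drop (Suc i) S ! (j (Suc t + x) - Suc i) = drop (Suc t) C ! x"
    proof
      show "j (Suc t + x) - Suc i < length (drop (Suc i) S)"
        using lt v jt by (simp add: diff_less_mono)
      show "drop (Suc i) S ! (j (Suc t + x) - Suc i) = drop (Suc t) C ! x"
        using lt v jt x by simp
    qed
  qed
  ultimately show ?thesis unfolding pos_cov_def using t subseq_idx by blast
qed

lemma pos_cov_imp_occ:
  assumes "pos_cov C S i" "i < length S"
  shows "\<exists>j. emb_idx j C S \<and> (\<exists>t<length C. j t = i)"
proof -
  obtain t where t: "t < length C" and ct: "C!t = S!i"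
    and s1: "subseq (take t C) (take i S)" and s2: "subseq (drop (Suc t) C) (drop (Suc i) S)"
    using assms unfolding pos_cov_def by blast
  obtain j1 where j1: "emb_idx j1 (take t C) (take i S)" using s1 subseq_idx by blast
  obtain j2 where j2: "emb_idx j2 (drop (Suc t) C) (drop (Suc i) S)" using s2 subseq_idx by blast
  define j where "j = (\<lambda>x. if x < t then j1 x else if x = t then i else Suc i + j2 (x - Suc t))"
  have j1v: "j1 x < i \<and> S ! (j1 x) = C ! x" if x: "x < t" for x
  proof -
    have "x < length (take t C)" using x t by simp
    then have "j1 x < length (take i S) \<and> take i S ! j1 x = take t C ! x"
      using j1 unfolding emb_idx_def by blast
    then have a: "j1 x < i" and b: "take i S ! j1 x = C ! x" using x by simp_all
    have "take i S ! j1 x = S ! j1 x" using a by simp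
    then show ?thesis using a b by simp
  qed
  have j1m: "j1 x < j1 (Suc x)" if x: "Suc x < t" for x
  proof -
    have "Suc x < length (take t C)" using x t by simp
    then show ?thesis using j1 unfolding emb_idx_def by blast
  qed
  have j2v: "Suc i + j2 x < length S \<and> S ! (Suc i + j2 x) = C ! (Suc t + x)"
    if x: "Suc t + x < length C" for x
  proof -
    have "x < length C - Suc t" using x by simp
    then have "x < length (drop (Suc t) C)" by simp
    then have "j2 x < length (drop (Suc i) S) \<and> drop (Suc i) S ! j2 x = drop (Suc t) C ! x"
      using j2 unfolding emb_idx_def by blast
    then have a: "j2 x < length S - Suc i" and b: "drop (Suc i) S ! j2 x = C ! (Suc t + x)"
      using x by simp_all
    have "drop (Suc i) S ! j2 x = S ! (Suc i + j2 x)" using a by (simp add: nth_drop)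
    then show ?thesis using a b by simp
  qed
  have j2m: "j2 x < j2 (Suc x)" if x: "Suc (Suc t + x) < length C" for x
  proof -
    have "Suc x < length (drop (Suc t) C)" using x by simp
    then show ?thesis using j2 unfolding emb_idx_def by blast
  qed
  have "emb_idx j C S"
    unfolding emb_idx_def
  proof (rule conjI; intro allI impI)
    fix x assume x: "Suc x < length C"
    show "j x < j (Suc x)"
    proof (cases "Suc x < t")
      case True then show ?thesis using j1m unfolding j_def by simp
    next
      case False
      show ?thesis
      proof (cases "Suc x = t")
        case True then show ?thesis using j1v[of x] unfolding j_def by simp
      next
        case False
        then have "t \<le> x" using \<open>\<not> Suc x < t\<close> by simp
        then show ?thesis
        proof (cases "x = t")
          case True then show ?thesis unfolding j_def by simp
        next
          case False
          then obtain y where y: "x = Suc t + y" using \<open>t \<le> x\<close>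
            by (intro that[of "x - Suc t"]) simp
          then show ?thesis using j2m[of y] x unfolding j_def by simp
        qed
      qed
    qed
  next
    fix x assume x: "x < length C"
    show "j x < length S \<and> S ! j x = C ! x"
    proof (cases "x < t")
      case True then show ?thesis using j1v[of x] assms(2) unfolding j_def by simp
    next
      case False
      show ?thesis
      proof (cases "x = t")
        case True then show ?thesis using ct assms(2) unfolding j_def by simp
      next
        case False
        then obtain y where y: "x = Suc t + y" using \<open>\<not> x < t\<close>
          by (intro that[of "x - Suc t"]) simp
        then show ?thesis using j2v[of y] x unfolding j_def by simp
      qed
    qed
  qed
  moreover have "j t = i" unfolding j_def by simp
  ultimately show ?thesis using t by blast
qed

lemma s_cover_char: "s_cover C S \<longleftrightarrow> (\<forall>i<length S. pos_cov C S i)"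
proof -
  have "s_cover C S \<longleftrightarrow> (\<forall>i<length S. \<exists>j. emb_idx j C S \<and> (\<exists>t<length C. j t = i))"
    unfolding s_cover_def emb_idx_def by blast
  also have "\<dots> \<longleftrightarrow> (\<forall>i<length S. pos_cov C S i)"
  proof (intro iffI allI impI)
    fix i assume "\<forall>i<length S. \<exists>j. emb_idx j C S \<and> (\<exists>t<length C. j t = i)" "i < length S"
    then obtain j t where "emb_idx j C S" "t < length C" "j t = i" by blast
    then show "pos_cov C S i" by (rule occ_imp_pos_cov)
  next
    fix i assume "\<forall>i<length S. pos_cov C S i" "i < length S"
    then show "\<exists>j. emb_idx j C S \<and> (\<exists>t<length C. j t = i)" using pos_cov_imp_occ by blast
  qed
  finally show ?thesis .
qed

definition pos_cov_ex :: "'a list \<Rightarrow> 'a list \<Rightarrow> nat \<Rightarrow> bool" where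
  "pos_cov_ex C S i \<longleftrightarrow> list_ex (\<lambda>t. C!t = S!i \<and> subseq (take t C) (take i S) \<and> subseq (drop (Suc t) C) (drop (Suc i) S)) [0..<length C]"
definition cover_ex :: "'a list \<Rightarrow> 'a list \<Rightarrow> bool" where
  "cover_ex C S \<longleftrightarrow> list_all (pos_cov_ex C S) [0..<length S]"
definition prune_ex :: "'a list \<Rightarrow> 'a list \<Rightarrow> bool" where
  "prune_ex S P \<longleftrightarrow> list_all (\<lambda>i. subseq P (take i S) \<or> pos_cov_ex P S i) [0..<length S]"
fun search :: "nat \<Rightarrow> 'a list \<Rightarrow> 'a list \<Rightarrow> 'a list \<Rightarrow> bool" where
  "search 0 A S P = True"
| "search (Suc f) A S P = list_all (\<lambda>a. \<not> (subseq (P @ [a]) S \<and> prune_ex S (P @ [a])) \<or>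
      (\<not> cover_ex (P @ [a]) S \<and> search f A S (P @ [a]))) A"

lemma pos_cov_ex_eq: "pos_cov_ex C S i = pos_cov C S i"
  unfolding pos_cov_ex_def pos_cov_def list_ex_iff by auto

lemma cover_ex_eq: "cover_ex C S = s_cover C S"
  unfolding cover_ex_def s_cover_char list_all_iff pos_cov_ex_eq by auto

lemma subseq_take: "subseq (take n xs) xs"
  by (rule prefix_imp_subseq) (rule take_is_prefix)

lemma cover_prune:
  assumes "s_cover C S"
  shows "prune_ex S (take p C)"
  unfolding prune_ex_def list_all_iff pos_cov_ex_eq
proof
  fix i assume "i \<in> set [0..<length S]"
  then have i: "i < length S" by simp
  then obtain t where t: "t < length C" and ct: "C!t = S!i"
    and s1: "subseq (take t C) (take i S)" and s2: "subseq (drop (Suc t) C) (drop (Suc i) S)"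
    using assms unfolding s_cover_char pos_cov_def by blast
  show "subseq (take p C) (take i S) \<or> pos_cov (take p C) S i"
  proof (cases "t < p")
    case True
    have "drop (Suc t) (take p C) = take (p - Suc t) (drop (Suc t) C)" by (simp add: drop_take)
    then have "subseq (drop (Suc t) (take p C)) (drop (Suc t) C)" using subseq_take by metis
    then have "subseq (drop (Suc t) (take p C)) (drop (Suc i) S)" using s2 subseq_order.order_trans by blast
    moreover have "take t (take p C) = take t C" using True by simp
    moreover have "take p C ! t = C ! t" using True by simp
    ultimately have "pos_cov (take p C) S i" unfolding pos_cov_def using True t ct s1 by auto
    then show ?thesis by blast
  next
    case False
    then have "take p C = take p (take t C)" by simp
    then have "subseq (take p C) (take t C)" using subseq_take by metis
    then show ?thesis using s1 subseq_order.order_trans by blast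
  qed
qed

lemma cover_subseq:
  assumes "s_cover C S" "S \<noteq> []"
  shows "subseq C S"
proof -
  obtain t where t: "t < length C" and ct: "C!t = S!0"
    and s1: "subseq (take t C) (take 0 S)" and s2: "subseq (drop (Suc t) C) (drop (Suc 0) S)"
    using assms unfolding s_cover_char pos_cov_def by auto
  have "subseq (take t C @ [C!t] @ drop (Suc t) C) (take 0 S @ [S!0] @ drop (Suc 0) S)"
    using s1 s2 ct by (intro list_emb_append_mono) auto
  moreover have "take t C @ [C!t] @ drop (Suc t) C = C" using t by (simp add: id_take_nth_drop[symmetric])
  moreover have "take 0 S @ [S!0] @ drop (Suc 0) S = S" using assms(2) by (cases S) auto
  ultimately show ?thesis by simp
qed

lemma search_sound:
  assumes "search f A S P" "s_cover (P @ Q) S" "Q \<noteq> []" "length Q \<le> f" "set Q \<subseteq> set A" "S \<noteq> []"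
  shows False
  using assms
proof (induction f arbitrary: P Q)
  case 0 then show ?case by simp
next
  case (Suc f)
  then obtain a Q' where Q: "Q = a # Q'" by (cases Q) auto
  have a: "a \<in> set A" using Suc.prems Q by simp
  have C: "P @ Q = (P @ [a]) @ Q'" using Q by simp
  have "subseq (P @ Q) S" using cover_subseq Suc.prems by blast
  moreover have "subseq (P @ [a]) (P @ Q)" unfolding C by (rule prefix_imp_subseq) simp
  ultimately have sub: "subseq (P @ [a]) S" using subseq_order.order_trans by blast
  have "prune_ex S (take (length (P @ [a])) (P @ Q))" using cover_prune Suc.prems by blast
  then have pr: "prune_ex S (P @ [a])" using C by simp
  have step: "\<not> cover_ex (P @ [a]) S \<and> search f A S (P @ [a])"
    using Suc.prems(1) a sub pr by (auto simp: list_all_iff)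
  show ?case
  proof (cases "Q' = []")
    case True
    then show ?thesis using step Suc.prems(2) C by (simp add: cover_ex_eq)
  next
    case False
    show ?thesis using Suc.IH[of "P @ [a]" Q'] step Suc.prems C False Q by auto
  qed
qed

lemma search_prim:
  assumes "search (length S - 1) A S []" "S \<noteq> []" "set S \<subseteq> set A"
  shows "s_primitive S"
  unfolding s_primitive_def nontrivial_s_cover_def
proof
  assume "\<exists>C. s_cover C S \<and> length C < length S"
  then obtain C where c: "s_cover C S" and l: "length C < length S" by blast
  have "subseq C S" using cover_subseq c assms by blast
  have "set C \<subseteq> set S"
  proof
    fix x assume "x \<in> set C"
    then obtain y where "y \<in> set S" "x = y" using list_emb_set[OF \<open>subseq C S\<close>] by blast
    then show "x \<in> set S" by simp
  qed
  moreover have "C \<noteq> []"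
    using c assms(2) unfolding s_cover_char pos_cov_def by auto
  moreover have "length C \<le> length S - 1" using l by simp
  ultimately show False
    using search_sound[of "length S - 1" A S "[]" C] assms c by auto
qed

lemma pos_cov_split: "pos_cov C S i \<longleftrightarrow>
  (\<exists>C1 C2. C = C1 @ S!i # C2 \<and> subseq C1 (take i S) \<and> subseq C2 (drop (Suc i) S))"
proof
  assume "pos_cov C S i"
  then obtain t where t: "t < length C" "C!t = S!i" "subseq (take t C) (take i S)"
      "subseq (drop (Suc t) C) (drop (Suc i) S)" unfolding pos_cov_def by blast
  have "C = take t C @ S!i # drop (Suc t) C" using t(1,2) id_take_nth_drop by metis
  then show "\<exists>C1 C2. C = C1 @ S!i # C2 \<and> subseq C1 (take i S) \<and> subseq C2 (drop (Suc i) S)"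
    using t by blast
next
  assume "\<exists>C1 C2. C = C1 @ S!i # C2 \<and> subseq C1 (take i S) \<and> subseq C2 (drop (Suc i) S)"
  then obtain C1 C2 where c: "C = C1 @ S!i # C2" "subseq C1 (take i S)" "subseq C2 (drop (Suc i) S)"
    by blast
  have "length C1 < length C" "C ! length C1 = S!i" "take (length C1) C = C1"
       "drop (Suc (length C1)) C = C2" using c(1) by simp_all
  then show "pos_cov C S i" unfolding pos_cov_def using c by metis
qed

lemma uniq_left:
  "xs @ a # ys = us @ a # vs \<Longrightarrow> a \<notin> set xs \<Longrightarrow> a \<notin> set us \<Longrightarrow> xs = us \<and> ys = vs"
proof (induction xs arbitrary: us)
  case Nil then show ?case by (cases us) simp_all
next
  case (Cons x xs)
  show ?case
  proof (cases us)
    case Nil then show ?thesis using Cons.prems by simp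
  next
    case (Cons u us')
    then have "x = u" "xs @ a # ys = us' @ a # vs" "a \<notin> set xs" "a \<notin> set us'"
      using Cons.prems by simp_all
    then show ?thesis using Cons.IH[of us'] \<open>us = u # us'\<close> by simp
  qed
qed

lemma uniq_right:
  "zs @ a # ws = ps @ a # qs \<Longrightarrow> a \<notin> set zs \<Longrightarrow> a \<notin> set ws \<Longrightarrow> ps = zs \<and> qs = ws"
proof (induction zs arbitrary: ps)
  case Nil
  note pr = Nil.prems
  show ?case
  proof (cases ps)
    case Nil then show ?thesis using pr by simp
  next
    case (Cons p ps')
    then have "ws = ps' @ a # qs" using pr by simp
    then have "a \<in> set ws" by simp
    then show ?thesis using pr by blast
  qed
next
  case (Cons z zs)
  note pr = Cons.prems
  note ih = Cons.IH
  show ?case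
  proof (cases ps)
    case Nil then show ?thesis using pr by auto
  next
    case (Cons p ps')
    then have "z = p" "zs @ a # ws = ps' @ a # qs" "a \<notin> set zs"
      using pr by simp_all
    then have "ps' = zs \<and> qs = ws" using ih[of ps'] pr(3) by blast
    then show ?thesis using \<open>z = p\<close> \<open>ps = p # ps'\<close> by simp
  qed
qed

lemma subseq_set: "subseq xs ys \<Longrightarrow> set xs \<subseteq> set ys"
proof
  fix x assume "subseq xs ys" "x \<in> set xs"
  then obtain y where "y \<in> set ys" "x = y" by (rule list_emb_set)
  then show "x \<in> set ys" by simp
qed

lemma sub_split:
  assumes "subseq (xs @ a # ys) (zs @ a # ws)" "a \<notin> set zs" "a \<notin> set ws"
  shows "subseq xs zs \<and> subseq ys ws"
proof -
  obtain us vs where uv: "zs @ a # ws = us @ vs" "subseq xs us" "subseq (a # ys) vs"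
    using list_emb_appendD[OF assms(1)] by blast
  obtain us' v vs' where vs: "vs = us' @ v # vs'" "a = v" "subseq ys vs'"
    using list_emb_ConsD[OF uv(3)] by blast
  have "zs @ a # ws = (us @ us') @ a # vs'" using uv(1) vs by simp
  from uniq_right[OF this assms(2,3)] have "us @ us' = zs" "vs' = ws" by simp_all
  then have "prefix us zs" unfolding prefix_def by blast
  then have "subseq us zs" by (rule prefix_imp_subseq)
  then show ?thesis using uv(2) vs(3) \<open>vs' = ws\<close> subseq_order.order_trans by blast
qed

lemma prim_len:
  assumes "s_primitive w" "s_cover C w" shows "length w \<le> length C"
  using assms unfolding s_primitive_def nontrivial_s_cover_def by auto

lemma double_prim:
  assumes prim: "s_primitive w" and aw: "a \<notin> set w"
  shows "s_primitive (w @ a # w)"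
proof -
  define S where "S = w @ a # w"
  define n where "n = length w"
  have lenS: "length S = Suc (2 * n)" unfolding S_def n_def by simp
  have cov_C: False if cov: "s_cover C S" and short: "length C < length S" for C
  proof -
    have pc: "\<And>i. i < length S \<Longrightarrow> pos_cov C S i" using cov s_cover_char by blast
    have "pos_cov C S n" using pc lenS by simp
    then obtain C1 C2 where C0: "C = C1 @ S!n # C2" "subseq C1 (take n S)" "subseq C2 (drop (Suc n) S)"
      unfolding pos_cov_split by blast
    moreover have "S ! n = a" "take n S = w" "drop (Suc n) S = w" unfolding S_def n_def by simp_all
    ultimately have C: "C = C1 @ a # C2" "subseq C1 w" "subseq C2 w" by simp_all
    have aC1: "a \<notin> set C1" using C(2) subseq_set aw by blast
    have aC2: "a \<notin> set C2" using C(3) subseq_set aw by blast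
    have "s_cover C1 w" unfolding s_cover_char
    proof (intro allI impI)
      fix i assume i: "i < length w"
      have "pos_cov C S i" using pc i lenS n_def by simp
      then obtain D1 D2 where D0: "C = D1 @ S!i # D2" "subseq D1 (take i S)" "subseq D2 (drop (Suc i) S)"
        unfolding pos_cov_split by blast
      moreover have "S ! i = w ! i" "take i S = take i w" "drop (Suc i) S = drop (Suc i) w @ a # w"
        unfolding S_def using i by (simp_all add: nth_append)
      ultimately have D: "C = D1 @ w!i # D2" "subseq D1 (take i w)"
          "subseq D2 (drop (Suc i) w @ a # w)" by simp_all
      have aD1: "a \<notin> set D1" using D(2) subseq_set aw by (meson in_set_takeD subsetD)
      have xa: "w ! i \<noteq> a" using aw i by auto
      have "a \<in> set C" using C(1) by simp
      then have "a \<in> set D2" using D(1) aD1 xa by auto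
      then obtain E1 E2 where E: "D2 = E1 @ a # E2" "a \<notin> set E1" using split_list_first by metis
      have "(D1 @ w!i # E1) @ a # E2 = C1 @ a # C2" using D(1) E(1) C(1) by simp
      moreover have "a \<notin> set (D1 @ w!i # E1)" using aD1 xa E(2) by simp
      ultimately have c1: "C1 = D1 @ w!i # E1" using uniq_left[of _ a E2 C1 C2] aC1 by blast
      have "subseq (E1 @ a # E2) (drop (Suc i) w @ a # w)" using D(3) E(1) by simp
      moreover have "a \<notin> set (drop (Suc i) w)" using aw in_set_dropD by fast
      ultimately have "subseq E1 (drop (Suc i) w)" using sub_split aw by fast
      then show "pos_cov C1 w i" unfolding pos_cov_split using c1 D(2) by blast
    qed
    then have l1: "n \<le> length C1" using prim_len prim n_def by blast
    have "s_cover C2 w" unfolding s_cover_char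
    proof (intro allI impI)
      fix i assume i: "i < length w"
      have "pos_cov C S (Suc n + i)" using pc i lenS n_def by simp
      then obtain D1 D2 where D0: "C = D1 @ S!(Suc n + i) # D2" "subseq D1 (take (Suc n + i) S)"
          "subseq D2 (drop (Suc (Suc n + i)) S)"
        unfolding pos_cov_split by blast
      moreover have "S ! (Suc n + i) = w ! i" "take (Suc n + i) S = w @ a # take i w"
          "drop (Suc (Suc n + i)) S = drop (Suc i) w"
        unfolding S_def n_def using i by (simp_all add: nth_append)
      ultimately have D: "C = D1 @ w!i # D2" "subseq D1 (w @ a # take i w)"
          "subseq D2 (drop (Suc i) w)" by simp_all
      have aD2: "a \<notin> set D2" using D(3) subseq_set aw by (meson in_set_dropD subsetD)
      have xa: "w ! i \<noteq> a" using aw i by auto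
      have "a \<in> set C" using C(1) by simp
      then have "a \<in> set D1" using D(1) aD2 xa by auto
      then obtain E1 E2 where E: "D1 = E1 @ a # E2" "a \<notin> set E1" using split_list_first by metis
      have "E1 @ a # (E2 @ w!i # D2) = C1 @ a # C2" using D(1) E(1) C(1) by simp
      then have c2: "C2 = E2 @ w!i # D2" using uniq_left[of E1 a _ C1 C2] aC1 E(2) by blast
      have "subseq (E1 @ a # E2) (w @ a # take i w)" using D(2) E(1) by simp
      moreover have "a \<notin> set (take i w)" using aw in_set_takeD by fast
      ultimately have "subseq E2 (take i w)" using sub_split aw by fast
      then show "pos_cov C2 w i" unfolding pos_cov_split using c2 D(3) by blast
    qed
    then have l2: "n \<le> length C2" using prim_len prim n_def by blast
    have "length C = length C1 + length C2 + 1" using C(1) by simp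
    then show False using l1 l2 short lenS by simp
  qed
  show ?thesis unfolding s_primitive_def nontrivial_s_cover_def S_def[symmetric]
    using cov_C by blast
qed

definition base :: "nat list" where "base = [0,1,0,2,0,3,1,0,1,3,2,0,1,2,1,0,3,0,2]"

lemma base_search: "search 18 [0,1,2,3] base []"
  unfolding base_def by code_simp

lemma base_prim: "s_primitive base"
proof (rule search_prim[where A = "[0,1,2,3]"])
  have "length base - 1 = 18" by (simp add: base_def)
  then show "search (length base - 1) [0,1,2,3] base []" using base_search by (simp only:)
  show "base \<noteq> []" by (simp add: base_def)
  show "set base \<subseteq> set [0,1,2,3]" by (simp add: base_def)
qed

primrec Wn :: "nat \<Rightarrow> nat list" where
  "Wn 0 = base"
| "Wn (Suc n) = Wn n @ (n + 4) # Wn n"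

lemma Wn_set: "set (Wn n) \<subseteq> {0..<n+4}"
  by (induction n) (auto simp: base_def)

lemma Wn_prim: "s_primitive (Wn n)"
proof (induction n)
  case 0 then show ?case using base_prim by simp
next
  case (Suc n)
  have "n + 4 \<notin> set (Wn n)" using Wn_set[of n] by auto
  then show ?case using double_prim Suc by simp
qed

lemma Wn_len: "Suc (length (Wn n)) = 5 * 2 ^ (n + 2)"
  by (induction n) (auto simp: base_def)

theorem mainTheorem2:
  fixes k :: nat
  assumes "k \<ge> 4"
  shows "gamma k \<ge> enat (5 * 2 ^ (k - 2) - 1)"
proof -
  define n where "n = k - 4"
  have k: "k = n + 4" using assms n_def by simp
  have k2: "k - 2 = n + 2" using k by simp
  have "length (Wn n) = Suc (length (Wn n)) - 1" by simp
  also have "\<dots> = 5 * 2 ^ (n + 2) - 1" by (simp only: Wn_len)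
  finally have len: "length (Wn n) = 5 * 2 ^ (k - 2) - 1" using k2 by simp
  have "enat (length (Wn n)) \<in> {enat (length w) | w :: nat list. set w \<subseteq> {0..<k} \<and> s_primitive w}"
    using Wn_set[of n] Wn_prim[of n] k by blast
  then have "enat (length (Wn n)) \<le> gamma k" unfolding gamma_def by (rule Sup_upper)
  then show ?thesis using len by simp
qed

end
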